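(* For general parameters $a_j,b_j,c_j$, consider the following four elements of $G_1$, each of which has isolated fixed points on $T$: $k_{10}=[-1,1,1,-1,1,-1,1]$, $k_{11}=[-1,1,1,1,-1,1,-1]$, $k_{12}=[1,1,-1,-1,1,1,-1]$, $k_{13}=[1,1,-1,1,-1,-1,1]$. Then each of $k_{11},k_{12},k_{13}$ has fixed points lying on the base locus of the pencil $\{\hat X_\lambda\}_{\lambda}$ (i.e. on $\bigcap_\lambda\hat X_\lambda$), whereas no fixed point of $k_{10}$ lies on this base locus.
   Context: Setup (quadric model). Let $a_1,a_2,a_3,b_1,b_2,b_3,c_1,c_2,c_3\in\mathbb C$ be general, so that the following three curves are smooth elliptic curves: $E_1=\{(x_0:x_1:x_2:x_3)\in\mathbb P^3: x_1^2+x_2^2+x_3^2=0,\ x_0^2=a_1x_1^2+a_2x_2^2+a_3x_3^2\}$, $E_2=\{(u_0:u_1:u_2:u_3)\in\mathbb P^3: u_1^2+u_2^2+u_3^2=0,\ u_0^2=b_1u_1^2+b_2u_2^2+b_3u_3^2\}$, $E_3=\{(z_0:z_1:z_2:z_3)\in\mathbb P^3: z_1^2+z_2^2+z_3^2=0,\ z_0^2=c_1z_1^2+c_2z_2^2+c_3z_3^2\}$. Let $T=E_1\times E_2\times E_3$, $\pi':T\to P_1:=C_1\times C_2\times C_3$ forgetting $x_0,u_0,z_0$ ($C_j\subset\mathbb P^2$ the conics $x_1^2+x_2^2+x_3^2=0$ etc.), with $C_j\cong\mathbb P^1$ via $(s_1:t_1)=(x_1+ix_2:x_3)=(-x_3:x_1-ix_2)$,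 $(s_2:t_2)=(u_1+iu_2:u_3)=(-u_3:u_1-iu_2)$, $(s_3:t_3)=(z_1+iz_2:z_3)=(-z_3:z_1-iz_2)$. For $\lambda\in\mathbb C$, $Y_\lambda=\{s_1s_2s_3=\lambda t_1t_2t_3\}\subset P_1$ and $\hat X_\lambda=\pi'^{-1}(Y_\lambda)$, a pencil of surfaces in $T$. For $\epsilon_0,\eta_1,\epsilon_1,\eta_0,\epsilon_2,\zeta_0,\epsilon_3\in\{\pm1\}$ with $\epsilon_1\epsilon_2\epsilon_3=1$, $[\epsilon_0,\eta_1,\epsilon_1,\eta_0,\epsilon_2,\zeta_0,\epsilon_3]$ denotes the automorphism of $T$: $(x_0:x_1:x_2:x_3)\mapsto(\epsilon_0x_0:\eta_1x_1:x_2:\epsilon_1x_3)$, $(u_0:u_1:u_2:u_3)\mapsto(\eta_0u_0:\eta_1u_1:u_2:\epsilon_2u_3)$, $(z_0:z_1:z_2:z_3)\mapsto(\zeta_0z_0:\eta_1z_1:z_2:\epsilon_3z_3)$; $G_1$ is the group of those with $\eta_1=1$. *)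

theory Defs
  imports Complex_Main
begin

text \<open>Points of P^3 are represented by nonzero vectors of C^4 (homogeneous
coordinates); two representatives give the same projective point iff proportional.\<close>

type_synonym hpt = "complex \<times> complex \<times> complex \<times> complex"

definition proj_eq :: "hpt \<Rightarrow> hpt \<Rightarrow> bool" where
  "proj_eq v w \<longleftrightarrow> (\<exists>c. c \<noteq> 0 \<and>
     (case v of (v0,v1,v2,v3) \<Rightarrow> case w of (w0,w1,w2,w3) \<Rightarrow>
        v0 = c*w0 \<and> v1 = c*w1 \<and> v2 = c*w2 \<and> v3 = c*w3))"

text \<open>Affine cone (minus 0) over the curve
  {x1^2+x2^2+x3^2 = 0, x0^2 = a1 x1^2 + a2 x2^2 + a3 x3^2} in P^3.\<close>
definition ellC :: "complex \<Rightarrow> complex \<Rightarrow> complex \<Rightarrow> hpt set" where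
  "ellC a1 a2 a3 = {(x0,x1,x2,x3). (x0,x1,x2,x3) \<noteq> (0,0,0,0) \<and>
      x1^2 + x2^2 + x3^2 = 0 \<and> x0^2 = a1*x1^2 + a2*x2^2 + a3*x3^2}"

text \<open>Smoothness of this complete intersection: at every point the gradients of the
  two defining quadrics F = x1^2+x2^2+x3^2 and H = x0^2 - a1 x1^2 - a2 x2^2 - a3 x3^2
  are linearly independent.\<close>
definition ell_smooth :: "complex \<Rightarrow> complex \<Rightarrow> complex \<Rightarrow> bool" where
  "ell_smooth a1 a2 a3 \<longleftrightarrow> (\<forall>x0 x1 x2 x3. (x0,x1,x2,x3) \<in> ellC a1 a2 a3 \<longrightarrow>
     (\<forall>\<alpha> \<beta>. (\<alpha> * 0 + \<beta> * (2*x0) = 0 \<and>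
               \<alpha> * (2*x1) + \<beta> * (-2*a1*x1) = 0 \<and>
               \<alpha> * (2*x2) + \<beta> * (-2*a2*x2) = 0 \<and>
               \<alpha> * (2*x3) + \<beta> * (-2*a3*x3) = 0) \<longrightarrow> \<alpha> = 0 \<and> \<beta> = 0))"

type_synonym tpt = "hpt \<times> hpt \<times> hpt"

definition Tset :: "complex \<Rightarrow> complex \<Rightarrow> complex \<Rightarrow> complex \<Rightarrow> complex \<Rightarrow> complex \<Rightarrow>
    complex \<Rightarrow> complex \<Rightarrow> complex \<Rightarrow> tpt set" where
  "Tset a1 a2 a3 b1 b2 b3 c1 c2 c3 = ellC a1 a2 a3 \<times> ellC b1 b2 b3 \<times> ellC c1 c2 c3"

definition proj_eq3 :: "tpt \<Rightarrow> tpt \<Rightarrow> bool" where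
  "proj_eq3 p q \<longleftrightarrow> proj_eq (fst p) (fst q) \<and> proj_eq (fst (snd p)) (fst (snd q))
      \<and> proj_eq (snd (snd p)) (snd (snd q))"

text \<open>The automorphism [e0,h1,e1,h0,e2,z0,e3] of T (signs given as complex numbers \<plusminus>1).\<close>
definition autT :: "complex \<Rightarrow> complex \<Rightarrow> complex \<Rightarrow> complex \<Rightarrow> complex \<Rightarrow> complex \<Rightarrow> complex
    \<Rightarrow> tpt \<Rightarrow> tpt" where
  "autT e0 h1 e1 h0 e2 z0 e3 p = (case p of ((x0,x1,x2,x3),(u0,u1,u2,u3),(w0,w1,w2,w3)) \<Rightarrow>
     ((e0*x0, h1*x1, x2, e1*x3), (h0*u0, h1*u1, u2, e2*u3), (z0*w0, h1*w1, w2, e3*w3)))"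

text \<open>Coordinate (s:t) on the conic C_j = P^1, given by (x1 + i x2 : x3) = (-x3 : x1 - i x2);
  we choose whichever representative is nonzero.\<close>
definition st :: "hpt \<Rightarrow> complex \<times> complex" where
  "st x = (case x of (x0,x1,x2,x3) \<Rightarrow>
     if x1 + \<i>*x2 \<noteq> 0 \<or> x3 \<noteq> 0 then (x1 + \<i>*x2, x3) else (-x3, x1 - \<i>*x2))"

definition Xhat :: "complex \<Rightarrow> complex \<Rightarrow> complex \<Rightarrow> complex \<Rightarrow> complex \<Rightarrow> complex \<Rightarrow>
    complex \<Rightarrow> complex \<Rightarrow> complex \<Rightarrow> complex \<Rightarrow> tpt set" where
  "Xhat a1 a2 a3 b1 b2 b3 c1 c2 c3 lam = {p \<in> Tset a1 a2 a3 b1 b2 b3 c1 c2 c3.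
      fst (st (fst p)) * fst (st (fst (snd p))) * fst (st (snd (snd p)))
      = lam * (snd (st (fst p)) * snd (st (fst (snd p))) * snd (st (snd (snd p))))}"

definition base_locus :: "complex \<Rightarrow> complex \<Rightarrow> complex \<Rightarrow> complex \<Rightarrow> complex \<Rightarrow> complex \<Rightarrow>
    complex \<Rightarrow> complex \<Rightarrow> complex \<Rightarrow> tpt set" where
  "base_locus a1 a2 a3 b1 b2 b3 c1 c2 c3 = (\<Inter>lam. Xhat a1 a2 a3 b1 b2 b3 c1 c2 c3 lam)"

definition fixT :: "tpt set \<Rightarrow> (tpt \<Rightarrow> tpt) \<Rightarrow> tpt set" where
  "fixT T g = {p \<in> T. proj_eq3 (g p) p}"

text \<open>Isolated fixed points: the fixed locus is a finite set of points of
  P^3 x P^3 x P^3, i.e. finite up to proportionality.\<close>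
definition finite_proj :: "tpt set \<Rightarrow> bool" where
  "finite_proj S \<longleftrightarrow> (\<exists>F. finite F \<and> (\<forall>p\<in>S. \<exists>q\<in>F. proj_eq3 p q))"

end

theory Submission imports Defs begin

definition sq :: "complex \<Rightarrow> complex set" where "sq w = {csqrt w, - csqrt w}"

lemma sq_mem: "y^2 = w \<Longrightarrow> y \<in> sq w"
proof -
  assume h: "y^2 = w"
  have "(y - csqrt w) * (y + csqrt w) = 0" using h by (simp add: algebra_simps power2_eq_square[symmetric])
  hence "y - csqrt w = 0 \<or> y + csqrt w = 0" by simp
  thus ?thesis unfolding sq_def by (auto simp: eq_neg_iff_add_eq_0)
qed

lemma smooth_distinct:
  assumes "ell_smooth a1 a2 a3" shows "a1 \<noteq> a2" "a1 \<noteq> a3" "a2 \<noteq> a3"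
proof -
  have S: "\<And>x0 x1 x2 x3 \<alpha> \<beta>. (x0,x1,x2,x3) \<in> ellC a1 a2 a3 \<Longrightarrow>
     \<alpha> * 0 + \<beta> * (2*x0) = 0 \<Longrightarrow> \<alpha> * (2*x1) + \<beta> * (-2*a1*x1) = 0 \<Longrightarrow>
     \<alpha> * (2*x2) + \<beta> * (-2*a2*x2) = 0 \<Longrightarrow> \<alpha> * (2*x3) + \<beta> * (-2*a3*x3) = 0 \<Longrightarrow> \<beta> = 0"
    using assms unfolding ell_smooth_def by blast
  show "a1 \<noteq> a2"
  proof
    assume e: "a1 = a2"
    have "(0,1,\<i>,0) \<in> ellC a1 a2 a3" using e by (simp add: ellC_def power2_eq_square)
    from S[OF this, of a1 1] e show False by simp
  qed
  show "a1 \<noteq> a3"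
  proof
    assume e: "a1 = a3"
    have "(0,1,0,\<i>) \<in> ellC a1 a2 a3" using e by (simp add: ellC_def power2_eq_square)
    from S[OF this, of a1 1] e show False by simp
  qed
  show "a2 \<noteq> a3"
  proof
    assume e: "a2 = a3"
    have "(0,0,1,\<i>) \<in> ellC a1 a2 a3" using e by (simp add: ellC_def power2_eq_square)
    from S[OF this, of a2 1] e show False by simp
  qed
qed

definition FA :: "complex \<Rightarrow> complex \<Rightarrow> complex \<Rightarrow> hpt set" where
  "FA a1 a2 a3 = {0} \<times> {1} \<times> sq ((a3-a1)/(a2-a3)) \<times> sq (-1 - (a3-a1)/(a2-a3))"
definition FB :: "complex \<Rightarrow> complex \<Rightarrow> complex \<Rightarrow> hpt set" where
  "FB a1 a2 a3 = sq (a1-a2) \<times> {1} \<times> sq (-1) \<times> {0}"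

lemma finite_FA: "finite (FA a1 a2 a3)" by (simp add: FA_def sq_def)
lemma finite_FB: "finite (FB a1 a2 a3)" by (simp add: FB_def sq_def)

lemma fixA:
  assumes sm: "ell_smooth a1 a2 a3" and v: "(x0,x1,x2,x3) \<in> ellC a1 a2 a3"
    and pe: "proj_eq (-x0,x1,x2,x3) (x0,x1,x2,x3)"
  shows "x0 = 0" "\<exists>q\<in>FA a1 a2 a3. proj_eq (x0,x1,x2,x3) q"
proof -
  note d = smooth_distinct[OF sm]
  from pe obtain c where c: "c \<noteq> 0" "-x0 = c*x0" "x1 = c*x1" "x2 = c*x2" "x3 = c*x3"
    unfolding proj_eq_def by auto
  from v have nz: "(x0,x1,x2,x3) \<noteq> (0,0,0,0)" and e1: "x1^2 + x2^2 + x3^2 = 0"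
    and e2: "x0^2 = a1*x1^2 + a2*x2^2 + a3*x3^2" by (auto simp: ellC_def)
  show x0: "x0 = 0"
  proof (cases "c = 1")
    case True thus ?thesis using c by simp
  next
    case False
    hence "x1 = 0" "x2 = 0" "x3 = 0" using c by (metis mult_cancel_right1)+
    thus ?thesis using e2 by simp
  qed
  have lin: "(a1-a3)*x1^2 + (a2-a3)*x2^2 = 0"
  proof -
    have "x3^2 = -(x1^2+x2^2)" using e1 by (simp add: algebra_simps eq_neg_iff_add_eq_0)
    hence "0 = a1*x1^2 + a2*x2^2 + a3*(-(x1^2+x2^2))" using e2 x0 by simp
    thus ?thesis by (simp add: algebra_simps)
  qed
  have x1: "x1 \<noteq> 0"
  proof
    assume h: "x1 = 0"
    hence "x2^2 = 0" using lin d by simp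
    hence "x2 = 0" by simp
    hence "x3 = 0" using e1 h by simp
    thus False using nz x0 h \<open>x2 = 0\<close> by simp
  qed
  have "x2^2 = (a3-a1)/(a2-a3) * x1^2" using lin d by (simp add: field_simps)
  hence s2: "(x2/x1)^2 = (a3-a1)/(a2-a3)" using x1 by (simp add: power_divide)
  have "x3^2 = (-1 - (a3-a1)/(a2-a3)) * x1^2"
    using e1 \<open>x2^2 = _\<close> by (simp add: algebra_simps eq_neg_iff_add_eq_0)
  hence s3: "(x3/x1)^2 = -1 - (a3-a1)/(a2-a3)" using x1 by (simp add: power_divide)
  have "(0, 1, x2/x1, x3/x1) \<in> FA a1 a2 a3" using s2 s3 by (simp add: FA_def sq_mem)
  moreover have "proj_eq (x0,x1,x2,x3) (0, 1, x2/x1, x3/x1)"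
    unfolding proj_eq_def using x0 x1 by (intro exI[of _ x1]) simp
  ultimately show "\<exists>q\<in>FA a1 a2 a3. proj_eq (x0,x1,x2,x3) q" by blast
qed

lemma fixB:
  assumes sm: "ell_smooth a1 a2 a3" and v: "(x0,x1,x2,x3) \<in> ellC a1 a2 a3"
    and pe: "proj_eq (x0,x1,x2,-x3) (x0,x1,x2,x3)"
  shows "\<exists>q\<in>FB a1 a2 a3. proj_eq (x0,x1,x2,x3) q"
proof -
  from pe obtain c where c: "c \<noteq> 0" "x0 = c*x0" "x1 = c*x1" "x2 = c*x2" "-x3 = c*x3"
    unfolding proj_eq_def by auto
  from v have nz: "(x0,x1,x2,x3) \<noteq> (0,0,0,0)" and e1: "x1^2 + x2^2 + x3^2 = 0"
    and e2: "x0^2 = a1*x1^2 + a2*x2^2 + a3*x3^2" by (auto simp: ellC_def)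
  have x3: "x3 = 0"
  proof (cases "c = 1")
    case True thus ?thesis using c by simp
  next
    case False
    hence "x0 = 0" "x1 = 0" "x2 = 0" using c by (metis mult_cancel_right1)+
    thus ?thesis using e1 by simp
  qed
  have x1: "x1 \<noteq> 0"
  proof
    assume h: "x1 = 0"
    hence "x2^2 = 0" using e1 x3 by simp
    hence "x2 = 0" by simp
    hence "x0 = 0" using e2 h x3 by simp
    thus False using nz x3 h \<open>x2 = 0\<close> by simp
  qed
  have "x2^2 = -1 * x1^2" using e1 x3 by (simp add: algebra_simps eq_neg_iff_add_eq_0)
  hence s2: "(x2/x1)^2 = -1" using x1 by (simp add: power_divide)
  have "x0^2 = (a1 - a2) * x1^2" using e2 x3 \<open>x2^2 = _\<close> by (simp add: algebra_simps)
  hence s0: "(x0/x1)^2 = a1 - a2" using x1 by (simp add: power_divide)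
  have "(x0/x1, 1, x2/x1, 0) \<in> FB a1 a2 a3" using s2 s0 by (simp add: FB_def sq_mem)
  moreover have "proj_eq (x0,x1,x2,x3) (x0/x1, 1, x2/x1, 0)"
    unfolding proj_eq_def using x3 x1 by (intro exI[of _ x1]) simp
  ultimately show ?thesis by blast
qed

lemma st_nz:
  assumes sm: "ell_smooth a1 a2 a3" and v: "(0,x1,x2,x3) \<in> ellC a1 a2 a3"
  shows "fst (st (0,x1,x2,x3)) \<noteq> 0"
proof -
  note d = smooth_distinct[OF sm]
  from v have nz: "(x1,x2,x3) \<noteq> (0,0,0)" and e1: "x1^2 + x2^2 + x3^2 = 0"
    and e2: "0 = a1*x1^2 + a2*x2^2 + a3*x3^2" by (auto simp: ellC_def)
  have fac: "x1^2 + x2^2 = (x1 + \<i>*x2) * (x1 - \<i>*x2)" by (simp add: algebra_simps power2_eq_square)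
  show ?thesis
  proof (cases "x1 + \<i>*x2 \<noteq> 0 \<or> x3 \<noteq> 0")
    case True
    show ?thesis
    proof
      assume "fst (st (0,x1,x2,x3)) = 0"
      hence "x1 + \<i>*x2 = 0" using True by (simp add: st_def)
      hence "x3^2 = 0" using e1 fac by simp
      thus False using True \<open>x1 + \<i>*x2 = 0\<close> by simp
    qed
  next
    case False
    hence x3: "x3 = 0" and x2: "x2 = \<i>*x1"
      by auto (metis add_eq_0_iff mult.assoc mult_1 i_squared mult_minus_left minus_minus power2_eq_square)
    have "x2^2 = -(x1^2)" using x2 by (simp add: power_mult_distrib)
    hence "0 = a1*x1^2 + a2*(-(x1^2))" using e2 x3 by simp
    hence "(a1 - a2) * x1^2 = 0" by (auto simp: algebra_simps)
    hence "x1^2 = 0" using d by simp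
    hence "x1 = 0" by simp
    thus ?thesis using nz x2 x3 by simp
  qed
qed

lemma fix_unpack:
  assumes "p \<in> fixT (Tset a1 a2 a3 b1 b2 b3 c1 c2 c3) (autT e0 1 e1 h0 e2 z0 e3)"
  obtains x0 x1 x2 x3 u0 u1 u2 u3 w0 w1 w2 w3 where
    "p = ((x0,x1,x2,x3),(u0,u1,u2,u3),(w0,w1,w2,w3))"
    "(x0,x1,x2,x3) \<in> ellC a1 a2 a3" "(u0,u1,u2,u3) \<in> ellC b1 b2 b3" "(w0,w1,w2,w3) \<in> ellC c1 c2 c3"
    "proj_eq (e0*x0,x1,x2,e1*x3) (x0,x1,x2,x3)"
    "proj_eq (h0*u0,u1,u2,e2*u3) (u0,u1,u2,u3)"
    "proj_eq (z0*w0,w1,w2,e3*w3) (w0,w1,w2,w3)"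
  using assms unfolding fixT_def Tset_def proj_eq3_def
  by (cases p) (auto simp: autT_def)

lemma fin3:
  assumes "finite F1" "finite F2" "finite F3"
    and "\<And>p. p \<in> S \<Longrightarrow> (\<exists>q1\<in>F1. proj_eq (fst p) q1) \<and> (\<exists>q2\<in>F2. proj_eq (fst (snd p)) q2)
          \<and> (\<exists>q3\<in>F3. proj_eq (snd (snd p)) q3)"
  shows "finite_proj S"
  unfolding finite_proj_def
proof (intro exI[of _ "F1 \<times> F2 \<times> F3"] conjI ballI)
  show "finite (F1 \<times> F2 \<times> F3)" using assms by simp
  fix p assume "p \<in> S"
  from assms(4)[OF this] obtain q1 q2 q3 where "q1 \<in> F1" "q2 \<in> F2" "q3 \<in> F3"
    "proj_eq (fst p) q1" "proj_eq (fst (snd p)) q2" "proj_eq (snd (snd p)) q3" by blast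
  thus "\<exists>q\<in>F1 \<times> F2 \<times> F3. proj_eq3 p q" unfolding proj_eq3_def
    by (intro bexI[of _ "(q1,q2,q3)"]) auto
qed

definition PA :: "complex \<Rightarrow> complex \<Rightarrow> complex \<Rightarrow> hpt" where
  "PA a1 a2 a3 = (0, csqrt (a2-a3), csqrt (a3-a1), csqrt (a1-a2))"
definition Ps :: "complex \<Rightarrow> complex \<Rightarrow> hpt" where
  "Ps a1 a2 = (csqrt (a1-a2), 1, \<i>, 0)"
definition Pt :: "complex \<Rightarrow> complex \<Rightarrow> hpt" where
  "Pt a1 a2 = (csqrt (a1-a2), 1, -\<i>, 0)"

lemma PA_in: "ell_smooth a1 a2 a3 \<Longrightarrow> PA a1 a2 a3 \<in> ellC a1 a2 a3"
  using smooth_distinct[of a1 a2 a3] unfolding PA_def ellC_def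
  by (simp add: algebra_simps)
lemma Ps_in: "Ps a1 a2 \<in> ellC a1 a2 a3"
  unfolding Ps_def ellC_def by (simp add: power2_eq_square power2_csqrt[unfolded power2_eq_square])
lemma Pt_in: "Pt a1 a2 \<in> ellC a1 a2 a3"
  unfolding Pt_def ellC_def by (simp add: power2_eq_square power2_csqrt[unfolded power2_eq_square])
lemma st_Ps: "fst (st (Ps a1 a2)) = 0"
  unfolding Ps_def st_def by simp
lemma st_Pt: "snd (st (Pt a1 a2)) = 0"
  unfolding Pt_def st_def by simp

lemma proj_eq_refl: "proj_eq v v"
  unfolding proj_eq_def by (cases v) (auto intro: exI[of _ 1])

lemma inB:
  assumes "p \<in> Tset a1 a2 a3 b1 b2 b3 c1 c2 c3"
    and "fst (st (fst p)) * fst (st (fst (snd p))) * fst (st (snd (snd p))) = 0"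
    and "snd (st (fst p)) * snd (st (fst (snd p))) * snd (st (snd (snd p))) = 0"
  shows "p \<in> base_locus a1 a2 a3 b1 b2 b3 c1 c2 c3"
  unfolding base_locus_def Xhat_def using assms by (simp del: mult_eq_0_iff)

theorem mainTheorem6:
  fixes a1 a2 a3 b1 b2 b3 c1 c2 c3 :: complex
  assumes "ell_smooth a1 a2 a3" and "ell_smooth b1 b2 b3" and "ell_smooth c1 c2 c3"
  defines "T \<equiv> Tset a1 a2 a3 b1 b2 b3 c1 c2 c3"
    and "B \<equiv> base_locus a1 a2 a3 b1 b2 b3 c1 c2 c3"
    and "k10 \<equiv> autT (-1) 1 1 (-1) 1 (-1) 1"
    and "k11 \<equiv> autT (-1) 1 1 1 (-1) 1 (-1)"
    and "k12 \<equiv> autT 1 1 (-1) (-1) 1 1 (-1)"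
    and "k13 \<equiv> autT 1 1 (-1) 1 (-1) (-1) 1"
  shows "finite_proj (fixT T k10) \<and> finite_proj (fixT T k11) \<and>
         finite_proj (fixT T k12) \<and> finite_proj (fixT T k13) \<and>
         fixT T k11 \<inter> B \<noteq> {} \<and> fixT T k12 \<inter> B \<noteq> {} \<and> fixT T k13 \<inter> B \<noteq> {} \<and>
         fixT T k10 \<inter> B = {}"
proof (intro conjI)
  note sm = assms(1-3)
  show "finite_proj (fixT T k10)"
  proof (rule fin3[OF finite_FA[of a1 a2 a3] finite_FA[of b1 b2 b3] finite_FA[of c1 c2 c3]])
    fix p assume "p \<in> fixT T k10"
    then obtain x0 x1 x2 x3 u0 u1 u2 u3 w0 w1 w2 w3 where h:
      "p = ((x0,x1,x2,x3),(u0,u1,u2,u3),(w0,w1,w2,w3))"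
      "(x0,x1,x2,x3) \<in> ellC a1 a2 a3" "(u0,u1,u2,u3) \<in> ellC b1 b2 b3" "(w0,w1,w2,w3) \<in> ellC c1 c2 c3"
      "proj_eq ((-1)*x0,x1,x2,1*x3) (x0,x1,x2,x3)"
      "proj_eq ((-1)*u0,u1,u2,1*u3) (u0,u1,u2,u3)"
      "proj_eq ((-1)*w0,w1,w2,1*w3) (w0,w1,w2,w3)"
      unfolding T_def k10_def by (rule fix_unpack)
    show "(\<exists>q1\<in>FA a1 a2 a3. proj_eq (fst p) q1) \<and> (\<exists>q2\<in>FA b1 b2 b3. proj_eq (fst (snd p)) q2)
          \<and> (\<exists>q3\<in>FA c1 c2 c3. proj_eq (snd (snd p)) q3)"
      using fixA(2)[OF sm(1) h(2)] fixA(2)[OF sm(2) h(3)] fixA(2)[OF sm(3) h(4)] h(1,5-7) by simp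
  qed
  show "finite_proj (fixT T k11)"
  proof (rule fin3[OF finite_FA[of a1 a2 a3] finite_FB[of b1 b2 b3] finite_FB[of c1 c2 c3]])
    fix p assume "p \<in> fixT T k11"
    then obtain x0 x1 x2 x3 u0 u1 u2 u3 w0 w1 w2 w3 where h:
      "p = ((x0,x1,x2,x3),(u0,u1,u2,u3),(w0,w1,w2,w3))"
      "(x0,x1,x2,x3) \<in> ellC a1 a2 a3" "(u0,u1,u2,u3) \<in> ellC b1 b2 b3" "(w0,w1,w2,w3) \<in> ellC c1 c2 c3"
      "proj_eq ((-1)*x0,x1,x2,1*x3) (x0,x1,x2,x3)"
      "proj_eq (1*u0,u1,u2,(-1)*u3) (u0,u1,u2,u3)"
      "proj_eq (1*w0,w1,w2,(-1)*w3) (w0,w1,w2,w3)"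
      unfolding T_def k11_def by (rule fix_unpack)
    show "(\<exists>q1\<in>FA a1 a2 a3. proj_eq (fst p) q1) \<and> (\<exists>q2\<in>FB b1 b2 b3. proj_eq (fst (snd p)) q2)
          \<and> (\<exists>q3\<in>FB c1 c2 c3. proj_eq (snd (snd p)) q3)"
      using fixA(2)[OF sm(1) h(2)] fixB[OF sm(2) h(3)] fixB[OF sm(3) h(4)] h(1,5-7) by simp
  qed
  show "finite_proj (fixT T k12)"
  proof (rule fin3[OF finite_FB[of a1 a2 a3] finite_FA[of b1 b2 b3] finite_FB[of c1 c2 c3]])
    fix p assume "p \<in> fixT T k12"
    then obtain x0 x1 x2 x3 u0 u1 u2 u3 w0 w1 w2 w3 where h:
      "p = ((x0,x1,x2,x3),(u0,u1,u2,u3),(w0,w1,w2,w3))"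
      "(x0,x1,x2,x3) \<in> ellC a1 a2 a3" "(u0,u1,u2,u3) \<in> ellC b1 b2 b3" "(w0,w1,w2,w3) \<in> ellC c1 c2 c3"
      "proj_eq (1*x0,x1,x2,(-1)*x3) (x0,x1,x2,x3)"
      "proj_eq ((-1)*u0,u1,u2,1*u3) (u0,u1,u2,u3)"
      "proj_eq (1*w0,w1,w2,(-1)*w3) (w0,w1,w2,w3)"
      unfolding T_def k12_def by (rule fix_unpack)
    show "(\<exists>q1\<in>FB a1 a2 a3. proj_eq (fst p) q1) \<and> (\<exists>q2\<in>FA b1 b2 b3. proj_eq (fst (snd p)) q2)
          \<and> (\<exists>q3\<in>FB c1 c2 c3. proj_eq (snd (snd p)) q3)"
      using fixB[OF sm(1) h(2)] fixA(2)[OF sm(2) h(3)] fixB[OF sm(3) h(4)] h(1,5-7) by simp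
  qed
  show "finite_proj (fixT T k13)"
  proof (rule fin3[OF finite_FB[of a1 a2 a3] finite_FB[of b1 b2 b3] finite_FA[of c1 c2 c3]])
    fix p assume "p \<in> fixT T k13"
    then obtain x0 x1 x2 x3 u0 u1 u2 u3 w0 w1 w2 w3 where h:
      "p = ((x0,x1,x2,x3),(u0,u1,u2,u3),(w0,w1,w2,w3))"
      "(x0,x1,x2,x3) \<in> ellC a1 a2 a3" "(u0,u1,u2,u3) \<in> ellC b1 b2 b3" "(w0,w1,w2,w3) \<in> ellC c1 c2 c3"
      "proj_eq (1*x0,x1,x2,(-1)*x3) (x0,x1,x2,x3)"
      "proj_eq (1*u0,u1,u2,(-1)*u3) (u0,u1,u2,u3)"
      "proj_eq ((-1)*w0,w1,w2,1*w3) (w0,w1,w2,w3)"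
      unfolding T_def k13_def by (rule fix_unpack)
    show "(\<exists>q1\<in>FB a1 a2 a3. proj_eq (fst p) q1) \<and> (\<exists>q2\<in>FB b1 b2 b3. proj_eq (fst (snd p)) q2)
          \<and> (\<exists>q3\<in>FA c1 c2 c3. proj_eq (snd (snd p)) q3)"
      using fixB[OF sm(1) h(2)] fixB[OF sm(2) h(3)] fixA(2)[OF sm(3) h(4)] h(1,5-7) by simp
  qed
  show "fixT T k11 \<inter> B \<noteq> {}"
  proof -
    define p where "p = (PA a1 a2 a3, Ps b1 b2, Pt c1 c2)"
    have pT: "p \<in> T" unfolding p_def T_def Tset_def using PA_in[OF sm(1)] Ps_in Pt_in by simp
    have "k11 p = p" unfolding p_def k11_def autT_def PA_def Ps_def Pt_def by simp
    hence "p \<in> fixT T k11" using pT unfolding fixT_def proj_eq3_def by (simp add: proj_eq_refl)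
    moreover have "p \<in> B" unfolding B_def using pT[unfolded T_def]
      by (rule inB) (simp_all add: p_def st_Ps st_Pt)
    ultimately show ?thesis by blast
  qed
  show "fixT T k12 \<inter> B \<noteq> {}"
  proof -
    define p where "p = (Ps a1 a2, PA b1 b2 b3, Pt c1 c2)"
    have pT: "p \<in> T" unfolding p_def T_def Tset_def using PA_in[OF sm(2)] Ps_in Pt_in by simp
    have "k12 p = p" unfolding p_def k12_def autT_def PA_def Ps_def Pt_def by simp
    hence "p \<in> fixT T k12" using pT unfolding fixT_def proj_eq3_def by (simp add: proj_eq_refl)
    moreover have "p \<in> B" unfolding B_def using pT[unfolded T_def]
      by (rule inB) (simp_all add: p_def st_Ps st_Pt)
    ultimately show ?thesis by blast
  qed
  show "fixT T k13 \<inter> B \<noteq> {}"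
  proof -
    define p where "p = (Ps a1 a2, Pt b1 b2, PA c1 c2 c3)"
    have pT: "p \<in> T" unfolding p_def T_def Tset_def using PA_in[OF sm(3)] Ps_in Pt_in by simp
    have "k13 p = p" unfolding p_def k13_def autT_def PA_def Ps_def Pt_def by simp
    hence "p \<in> fixT T k13" using pT unfolding fixT_def proj_eq3_def by (simp add: proj_eq_refl)
    moreover have "p \<in> B" unfolding B_def using pT[unfolded T_def]
      by (rule inB) (simp_all add: p_def st_Ps st_Pt)
    ultimately show ?thesis by blast
  qed
  show "fixT T k10 \<inter> B = {}"
  proof (rule ccontr)
    assume "fixT T k10 \<inter> B \<noteq> {}"
    then obtain p where p1: "p \<in> fixT T k10" and p2: "p \<in> B" by blast
    from p1 obtain x0 x1 x2 x3 u0 u1 u2 u3 w0 w1 w2 w3 where h: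
      "p = ((x0,x1,x2,x3),(u0,u1,u2,u3),(w0,w1,w2,w3))"
      "(x0,x1,x2,x3) \<in> ellC a1 a2 a3" "(u0,u1,u2,u3) \<in> ellC b1 b2 b3" "(w0,w1,w2,w3) \<in> ellC c1 c2 c3"
      "proj_eq ((-1)*x0,x1,x2,1*x3) (x0,x1,x2,x3)"
      "proj_eq ((-1)*u0,u1,u2,1*u3) (u0,u1,u2,u3)"
      "proj_eq ((-1)*w0,w1,w2,1*w3) (w0,w1,w2,w3)"
      unfolding T_def k10_def by (rule fix_unpack)
    have z: "x0 = 0" "u0 = 0" "w0 = 0"
      using fixA(1)[OF sm(1) h(2)] fixA(1)[OF sm(2) h(3)] fixA(1)[OF sm(3) h(4)] h(5-7) by simp_all
    have n1: "fst (st (0,x1,x2,x3)) \<noteq> 0" using st_nz[OF sm(1)] h(2) z by simp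
    have n2: "fst (st (0,u1,u2,u3)) \<noteq> 0" using st_nz[OF sm(2)] h(3) z by simp
    have n3: "fst (st (0,w1,w2,w3)) \<noteq> 0" using st_nz[OF sm(3)] h(4) z by simp
    from p2 have "p \<in> Xhat a1 a2 a3 b1 b2 b3 c1 c2 c3 0" unfolding B_def base_locus_def by blast
    hence "fst (st (0,x1,x2,x3)) * fst (st (0,u1,u2,u3)) * fst (st (0,w1,w2,w3)) = 0"
      unfolding Xhat_def using h(1) z by simp
    thus False using n1 n2 n3 by simp
  qed
qed

end
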